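(* Let $\Omega_1,\dots,\Omega_K$ be linear subspaces of $\mathbb{R}^n$ whose sum is $\mathbb{R}^n$. For each $k=1,\dots,K$ let $W_k$ be a matrix with rows $w_{k,1},\dots,w_{k,N_k}$, all lying in $\Omega_k$, such that $W_k$ has a directed spanning set of $\Omega_k$ with respect to every $x \in \Omega_k$. Let $W$ be the matrix obtained by stacking the rows of $W_1,\dots,W_K$. Then $W$ has a directed spanning set of $\mathbb{R}^n$ with respect to every $x \in \mathbb{R}^n$.
   Context: A matrix $W$ with rows $w_i \in \mathbb{R}^n$ has a directed spanning set (DSS) of a subspace $\Omega\subset\mathbb{R}^n$ with respect to $x \in \mathbb{R}^n$ if there is a collection of rows $w_i$ of $W$ with $\langle x, w_i\rangle \geq 0$ for each of them and whose span contains $\Omega$. *)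

theory Defs
  imports "HOL-Analysis.Analysis"
begin

text \<open>A matrix is represented by the list of its rows.\<close>

definition has_dss :: "('a::real_inner) list \<Rightarrow> 'a set \<Rightarrow> 'a \<Rightarrow> bool" where
  "has_dss W \<Omega> x \<longleftrightarrow> (\<exists>S. S \<subseteq> set W \<and> (\<forall>w\<in>S. inner x w \<ge> 0) \<and> \<Omega> \<subseteq> span S)"

end

theory Submission
  imports Defs
begin

theorem lemma2:
  fixes K :: nat
    and \<Omega> :: "nat \<Rightarrow> (real^'n) set"
    and W :: "nat \<Rightarrow> (real^'n) list"
  assumes subsp: "\<And>k. k < K \<Longrightarrow> subspace (\<Omega> k)"
    and sum_all: "{(\<Sum>k<K. v k) | v. \<forall>k<K. v k \<in> \<Omega> k} = UNIV"
    and rows_in: "\<And>k. k < K \<Longrightarrow> set (W k) \<subseteq> \<Omega> k"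
    and dss_k: "\<And>k x. k < K \<Longrightarrow> x \<in> \<Omega> k \<Longrightarrow> has_dss (W k) (\<Omega> k) x"
  shows "\<forall>x::real^'n. has_dss (concat (map W [0..<K])) UNIV x"
proof
  fix x :: "real^'n"
  have "\<forall>k. k < K \<longrightarrow> (\<exists>S. S \<subseteq> set (W k) \<and> (\<forall>w\<in>S. inner x w \<ge> 0) \<and> \<Omega> k \<subseteq> span S)"
  proof (intro allI impI)
    fix k assume k: "k < K"
    obtain y z where yz: "y \<in> span (\<Omega> k)" "\<And>w. w \<in> span (\<Omega> k) \<Longrightarrow> orthogonal z w" "x = y + z"
      by (rule orthogonal_subspace_decomp_exists[of "\<Omega> k" x]) blast
    have y: "y \<in> \<Omega> k" using yz(1) subsp[OF k] by (metis span_eq_iff)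
    obtain S where S: "S \<subseteq> set (W k)" "\<forall>w\<in>S. inner y w \<ge> 0" "\<Omega> k \<subseteq> span S"
      using dss_k[OF k y] unfolding has_dss_def by blast
    have "\<forall>w\<in>S. inner x w \<ge> 0"
    proof
      fix w assume w: "w \<in> S"
      then have "w \<in> \<Omega> k" using S(1) rows_in[OF k] by blast
      then have "w \<in> span (\<Omega> k)" by (rule span_base)
      then have "inner z w = 0" using yz(2) by (simp add: orthogonal_def)
      then show "inner x w \<ge> 0" using S(2) w yz(3) by (simp add: inner_add_left)
    qed
    then show "\<exists>S. S \<subseteq> set (W k) \<and> (\<forall>w\<in>S. inner x w \<ge> 0) \<and> \<Omega> k \<subseteq> span S"
      using S by blast
  qed
  then have "\<forall>k. \<exists>S. k < K \<longrightarrow> (S \<subseteq> set (W k) \<and> (\<forall>w\<in>S. inner x w \<ge> 0) \<and> \<Omega> k \<subseteq> span S)"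
    by blast
  from choice[OF this] obtain SS where SS0: "\<forall>k. k < K \<longrightarrow> SS k \<subseteq> set (W k) \<and> (\<forall>w\<in>SS k. inner x w \<ge> 0) \<and> \<Omega> k \<subseteq> span (SS k)"
    by blast
  have SS: "\<And>k. k < K \<Longrightarrow> SS k \<subseteq> set (W k) \<and> (\<forall>w\<in>SS k. inner x w \<ge> 0) \<and> \<Omega> k \<subseteq> span (SS k)"
    using SS0 by blast
  define S where "S = (\<Union>k<K. SS k)"
  have cc: "set (concat (map W [0..<K])) = (\<Union>k<K. set (W k))" by auto
  have "S \<subseteq> set (concat (map W [0..<K]))"
    unfolding S_def cc using SS by (intro UN_mono) auto
  moreover have "\<forall>w\<in>S. inner x w \<ge> 0" unfolding S_def using SS by blast
  moreover have "UNIV \<subseteq> span S"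
  proof
    fix u :: "real^'n"
    have "u \<in> {(\<Sum>k<K. v k) | v. \<forall>k<K. v k \<in> \<Omega> k}" using sum_all by simp
    then obtain v where v: "u = (\<Sum>k<K. v k)" "\<forall>k<K. v k \<in> \<Omega> k" by blast
    have "\<And>k. k \<in> {..<K} \<Longrightarrow> v k \<in> span S"
    proof -
      fix k assume "k \<in> {..<K}"
      then have k: "k < K" by simp
      have "v k \<in> span (SS k)" using SS[OF k] v(2) k by blast
      moreover have "span (SS k) \<subseteq> span S" unfolding S_def using k by (intro span_mono) blast
      ultimately show "v k \<in> span S" by blast
    qed
    then show "u \<in> span S" unfolding v(1) by (rule span_sum)
  qed
  ultimately show "has_dss (concat (map W [0..<K])) UNIV x" unfolding has_dss_def by blast
qed

end
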